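(* Consider a credit-attribution game in which every paper has exactly two authors, two distinct players $x,y$, and the reliability extension of the full credit game with fixed $p_x,p_y\in[0,1]$, baseline reliabilities $p^*_l\in(0,1]$, cost slopes $L_l,R_l>0$ and budget $B\ge0$. In the pairwise attack problem one must choose a feasible fractional attack on $x$ that leaves the reliabilities of $y$ and of all coauthors of $y$ at their baseline values, minimizing $Sh[\overline{v_{FC}}](x)$. Then the following is an optimal pairwise attack: run the greedy procedure (sort by decreasing $C(x,l)/R_l$, raise to $1$ in order while the budget allows, raise the next one as much as the remaining budget allows, leave everything else at baseline) restricted to the players $l\in CA(x)\setminus(CA(y)\cup\{y\})$.
   Context: Credit-attribution game: authors $N$, papers $P_k$ with author sets $Auth_k$ and weights $w_k\in\mathbb{R}_+$; $CA(z)$ is the set of coauthors of $z$; $C(x,l)=\sum w_k$ over papers authored by both $x$ and $l$. $v_{FC}(S)=\sum\{w_k:Auth_k\cap S\ne\emptyset\}$. For $T\subseteq S$, $\Pi_{T,S}=\prod_{i\in T}p_i\prod_{i\in S\setminus T}(1-p_i)$; reliability extension $\overline v(S)=\sum_{T\subseteq S}v(T)\Pi_{T,S}$. Shapley value $Sh[v](x)=\frac1{n!}\sum_\pi[v(S^x_\pi\cup\{x\})-v(S^x_\pi)]$. Fractional attack on $x$: $p_x$ fixed; for $j\ne x$ choose $p_j\in[0,1]$ at cost $u_j(p_j)=L_j(p^*_j-p_j)$ if $p_j<p^*_j$, $R_j(p_j-p^*_j)$ otherwise; feasible if the total cost is at most $B$. *)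

theory Defs
  imports Complex_Main "HOL-Combinatorics.Multiset_Permutations"
begin

definition coauthors :: "'a set \<Rightarrow> 'k set \<Rightarrow> ('k \<Rightarrow> 'a set) \<Rightarrow> 'a \<Rightarrow> 'a set" where
  "coauthors N P Auth z = {l \<in> N. l \<noteq> z \<and> (\<exists>k\<in>P. z \<in> Auth k \<and> l \<in> Auth k)}"

definition joint_credit :: "'k set \<Rightarrow> ('k \<Rightarrow> 'a set) \<Rightarrow> ('k \<Rightarrow> real) \<Rightarrow> 'a \<Rightarrow> 'a \<Rightarrow> real" where
  "joint_credit P Auth w x l = (\<Sum>k\<in>{k\<in>P. x \<in> Auth k \<and> l \<in> Auth k}. w k)"

definition v_FC :: "'k set \<Rightarrow> ('k \<Rightarrow> 'a set) \<Rightarrow> ('k \<Rightarrow> real) \<Rightarrow> 'a set \<Rightarrow> real" where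
  "v_FC P Auth w S = (\<Sum>k\<in>{k\<in>P. Auth k \<inter> S \<noteq> {}}. w k)"

definition Pi_rel :: "('a \<Rightarrow> real) \<Rightarrow> 'a set \<Rightarrow> 'a set \<Rightarrow> real" where
  "Pi_rel p T S = (\<Prod>i\<in>T. p i) * (\<Prod>i\<in>S - T. 1 - p i)"

definition rel_ext :: "('a set \<Rightarrow> real) \<Rightarrow> ('a \<Rightarrow> real) \<Rightarrow> 'a set \<Rightarrow> real" where
  "rel_ext v p S = (\<Sum>T\<in>Pow S. v T * Pi_rel p T S)"

definition preds :: "'a list \<Rightarrow> 'a \<Rightarrow> 'a set" where
  "preds ord x = set (takeWhile (\<lambda>z. z \<noteq> x) ord)"

definition shapley :: "'a set \<Rightarrow> ('a set \<Rightarrow> real) \<Rightarrow> 'a \<Rightarrow> real" where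
  "shapley N v x = (1 / fact (card N)) *
     (\<Sum>ord\<in>permutations_of_set N. v (insert x (preds ord x)) - v (preds ord x))"

definition attack_cost :: "'a set \<Rightarrow> ('a \<Rightarrow> real) \<Rightarrow> ('a \<Rightarrow> real) \<Rightarrow> ('a \<Rightarrow> real) \<Rightarrow> 'a \<Rightarrow> ('a \<Rightarrow> real) \<Rightarrow> real" where
  "attack_cost N L R pstar x q =
     (\<Sum>j\<in>N - {x}. if q j < pstar j then L j * (pstar j - q j) else R j * (q j - pstar j))"

definition feasible_attack :: "'a set \<Rightarrow> ('a \<Rightarrow> real) \<Rightarrow> ('a \<Rightarrow> real) \<Rightarrow> ('a \<Rightarrow> real) \<Rightarrow> real \<Rightarrow> 'a \<Rightarrow> ('a \<Rightarrow> real) \<Rightarrow> bool" where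
  "feasible_attack N L R pstar B x q \<longleftrightarrow>
     q x = pstar x \<and> (\<forall>j\<in>N - {x}. 0 \<le> q j \<and> q j \<le> 1) \<and> attack_cost N L R pstar x q \<le> B"

definition pairwise_attack :: "'a set \<Rightarrow> 'k set \<Rightarrow> ('k \<Rightarrow> 'a set) \<Rightarrow> ('a \<Rightarrow> real) \<Rightarrow> ('a \<Rightarrow> real) \<Rightarrow> ('a \<Rightarrow> real) \<Rightarrow> real \<Rightarrow> 'a \<Rightarrow> 'a \<Rightarrow> ('a \<Rightarrow> real) \<Rightarrow> bool" where
  "pairwise_attack N P Auth L R pstar B x y q \<longleftrightarrow>
     feasible_attack N L R pstar B x q \<and>
     (\<forall>j\<in>insert y (coauthors N P Auth y) - {x}. q j = pstar j)"

fun greedy :: "('a \<Rightarrow> real) \<Rightarrow> ('a \<Rightarrow> real) \<Rightarrow> real \<Rightarrow> 'a list \<Rightarrow> ('a \<Rightarrow> real)" where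
  "greedy R pstar b [] = pstar"
| "greedy R pstar b (l # ls) =
     (if R l * (1 - pstar l) \<le> b
      then (greedy R pstar (b - R l * (1 - pstar l)) ls)(l := 1)
      else pstar(l := pstar l + b / R l))"

end

theory Submission
  imports Defs
begin


lemma sum_pow_disj:
  assumes "finite S"
  shows "(\<Sum>T\<in>Pow S. (if A \<inter> T = {} then 1 else 0) * Pi_rel p T S) = (\<Prod>i\<in>S \<inter> A. 1 - p i)"
proof -
  have "(\<Prod>i\<in>S. (if i \<in> A then 0 else p i) + (1 - p i)) =
        (\<Sum>X\<in>Pow S. (\<Prod>i\<in>X. (if i \<in> A then 0 else p i)) * (\<Prod>i\<in>S-X. 1 - p i))"
    by (rule prod_add[OF assms])
  also have "\<dots> = (\<Sum>T\<in>Pow S. (if A \<inter> T = {} then 1 else 0) * Pi_rel p T S)"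
  proof (rule sum.cong[OF refl])
    fix X assume X: "X \<in> Pow S"
    then have fX: "finite X" using assms finite_subset by auto
    have "(\<Prod>i\<in>X. (if i \<in> A then 0 else p i)) = (if A \<inter> X = {} then 1 else 0) * (\<Prod>i\<in>X. p i)"
    proof (cases "A \<inter> X = {}")
      case True
      then show ?thesis by (auto intro!: prod.cong)
    next
      case False
      then obtain i where "i \<in> A" "i \<in> X" by auto
      then show ?thesis using False fX by (auto intro: prod_zero)
    qed
    then show "(\<Prod>i\<in>X. (if i \<in> A then 0 else p i)) * (\<Prod>i\<in>S-X. 1 - p i) =
       (if A \<inter> X = {} then 1 else 0) * Pi_rel p X S" by (simp add: Pi_rel_def)
  qed
  finally have 1: "(\<Prod>i\<in>S. (if i \<in> A then 0 else p i) + (1 - p i)) = (\<Sum>T\<in>Pow S. (if A \<inter> T = {} then 1 else 0) * Pi_rel p T S)" .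
  have "(\<Prod>i\<in>S. (if i \<in> A then 0 else p i) + (1 - p i)) = (\<Prod>i\<in>S. if i \<in> A then 1 - p i else 1)"
    by (auto intro!: prod.cong)
  also have "\<dots> = (\<Prod>i\<in>S \<inter> A. 1 - p i)"
    using prod.inter_restrict[OF assms, of "\<lambda>i. 1 - p i" A] by (simp add: if_distrib)
  finally show ?thesis using 1 by simp
qed

lemma rel_ext_vFC:
  assumes "finite S" "finite P"
  shows "rel_ext (v_FC P Auth w) p S = (\<Sum>k\<in>P. w k * (1 - (\<Prod>i\<in>Auth k \<inter> S. 1 - p i)))"
proof -
  have "rel_ext (v_FC P Auth w) p S =
     (\<Sum>T\<in>Pow S. (\<Sum>k\<in>P. w k * (1 - (if Auth k \<inter> T = {} then 1 else 0))) * Pi_rel p T S)"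
    unfolding rel_ext_def v_FC_def
    by (rule sum.cong[OF refl]) (auto simp add: sum.inter_filter[OF assms(2)] intro!: sum.cong)
  also have "\<dots> = (\<Sum>k\<in>P. w k * (\<Sum>T\<in>Pow S. (1 - (if Auth k \<inter> T = {} then 1 else 0)) * Pi_rel p T S))"
    by (simp add: sum_distrib_left sum_distrib_right sum.swap[of _ "Pow S"] mult.assoc)
  also have "\<dots> = (\<Sum>k\<in>P. w k * (1 - (\<Prod>i\<in>Auth k \<inter> S. 1 - p i)))"
  proof (rule sum.cong[OF refl])
    fix k
    have e: "(\<Sum>T\<in>Pow S. Pi_rel p T S) = 1"
      using sum_pow_disj[OF assms(1), of "{}" p] by simp
    have "(\<Sum>T\<in>Pow S. (1 - (if Auth k \<inter> T = {} then 1 else 0)) * Pi_rel p T S)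
       = (\<Sum>T\<in>Pow S. Pi_rel p T S) - (\<Sum>T\<in>Pow S. (if Auth k \<inter> T = {} then 1 else 0) * Pi_rel p T S)"
      by (simp add: left_diff_distrib sum_subtractf)
    also have "\<dots> = 1 - (\<Prod>i\<in>Auth k \<inter> S. 1 - p i)"
      using e sum_pow_disj[OF assms(1), of "Auth k" p] by (simp add: Int_commute)
    finally show "w k * (\<Sum>T\<in>Pow S. (1 - (if Auth k \<inter> T = {} then 1 else 0)) * Pi_rel p T S) = w k * (1 - (\<Prod>i\<in>Auth k \<inter> S. 1 - p i))" by simp
  qed
  finally show ?thesis .
qed



lemma takeWhile_split: "x \<notin> set us \<Longrightarrow> takeWhile (\<lambda>z. z \<noteq> x) (us @ x # vs) = us"
  by (induction us) auto

lemma preds_swap: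
  assumes d: "distinct ord" and xo: "x \<in> set ord" and ao: "a \<in> set ord" and ax: "a \<noteq> x"
  defines "\<sigma> \<equiv> (\<lambda>z. if z = x then a else if z = a then x else z)"
  shows "a \<in> preds (map \<sigma> ord) x \<longleftrightarrow> a \<notin> preds ord x"
proof -
  obtain us vs where o: "ord = us @ x # vs" and xus: "x \<notin> set us"
    using split_list_first[OF xo] by blast
  have p1: "preds ord x = set us" unfolding preds_def o using xus takeWhile_split by metis
  show ?thesis
  proof (cases "a \<in> set us")
    case True
    then obtain us1 us2 where u: "us = us1 @ a # us2" using split_list by metis
    have "a \<notin> set us1" using d unfolding o u by auto
    moreover have "x \<notin> set us1" using xus u by auto
    ultimately have n1: "x \<notin> set (map \<sigma> us1)" and n2: "a \<notin> set (map \<sigma> us1)"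
      unfolding \<sigma>_def using ax by auto
    have "map \<sigma> ord = map \<sigma> us1 @ x # (map \<sigma> us2 @ a # map \<sigma> vs)"
      unfolding o u \<sigma>_def using ax by simp
    then have "preds (map \<sigma> ord) x = set (map \<sigma> us1)"
      unfolding preds_def using n1 takeWhile_split by metis
    then show ?thesis using n2 True p1 by simp
  next
    case False
    then have "a \<in> set vs" using ao ax o by auto
    then obtain vs1 vs2 where v: "vs = vs1 @ a # vs2" using split_list by metis
    have "a \<notin> set vs1" using d unfolding o v by auto
    then have n1: "x \<notin> set (map \<sigma> us @ a # map \<sigma> vs1)"
      unfolding \<sigma>_def using ax False by auto
    have "map \<sigma> ord = (map \<sigma> us @ a # map \<sigma> vs1) @ x # map \<sigma> vs2"
      unfolding o v \<sigma>_def using ax by simp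
    then have "preds (map \<sigma> ord) x = set (map \<sigma> us @ a # map \<sigma> vs1)"
      unfolding preds_def using n1 takeWhile_split by metis
    then show ?thesis using False p1 by simp
  qed
qed

lemma count_half:
  assumes "finite N" "a \<in> N" "x \<in> N" "a \<noteq> x"
  shows "(\<Sum>ord\<in>permutations_of_set N. if a \<in> preds ord x then 1 else 0 :: real)
         = real (card (permutations_of_set N)) / 2"
proof -
  define \<sigma> where "\<sigma> = (\<lambda>z. if z = x then a else if z = a then x else z)"
  have ss: "\<sigma> (\<sigma> z) = z" for z unfolding \<sigma>_def by auto
  have mm: "map \<sigma> (map \<sigma> ord) = ord" for ord by (simp add: ss map_idI)
  have inj: "inj \<sigma>" by (metis ss injI)
  have sN: "\<sigma> ` N = N"
  proof
    show "\<sigma> ` N \<subseteq> N" using assms unfolding \<sigma>_def by auto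
    show "N \<subseteq> \<sigma> ` N" using assms unfolding \<sigma>_def by (auto intro: image_eqI[where x="\<sigma> _"] simp: ss[unfolded \<sigma>_def])
  qed
  have mp: "map \<sigma> ord \<in> permutations_of_set N" if "ord \<in> permutations_of_set N" for ord
    using that sN inj by (auto simp: permutations_of_set_def distinct_map intro: inj_on_subset[OF inj])
  have "(\<Sum>ord\<in>permutations_of_set N. if a \<in> preds ord x then 1 else 0 :: real)
      = (\<Sum>ord\<in>permutations_of_set N. if a \<in> preds (map \<sigma> ord) x then 1 else 0 :: real)"
    by (rule sum.reindex_bij_witness[where i="map \<sigma>" and j="map \<sigma>"]) (auto simp: mm mp simp del: map_map)
  also have "\<dots> = (\<Sum>ord\<in>permutations_of_set N. if a \<in> preds ord x then 0 else 1 :: real)"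
  proof (rule sum.cong[OF refl])
    fix ord assume "ord \<in> permutations_of_set N"
    then have "distinct ord" "set ord = N" by (auto simp: permutations_of_set_def)
    then show "(if a \<in> preds (map \<sigma> ord) x then 1 else 0 :: real) = (if a \<in> preds ord x then 0 else 1)"
      using preds_swap[of ord x a] assms unfolding \<sigma>_def by auto
  qed
  finally have e: "(\<Sum>ord\<in>permutations_of_set N. if a \<in> preds ord x then 1 else 0 :: real)
      = (\<Sum>ord\<in>permutations_of_set N. if a \<in> preds ord x then 0 else 1 :: real)" .
  have "(\<Sum>ord\<in>permutations_of_set N. if a \<in> preds ord x then 1 else 0 :: real)
      + (\<Sum>ord\<in>permutations_of_set N. if a \<in> preds ord x then 0 else 1 :: real)
      = real (card (permutations_of_set N))"
    by (simp add: sum.distrib[symmetric] if_distrib cong: if_cong)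
  then show ?thesis using e by simp
qed



definition oth :: "('k \<Rightarrow> 'a set) \<Rightarrow> 'a \<Rightarrow> 'k \<Rightarrow> 'a" where
  "oth Auth x k = the_elem (Auth k - {x})"

lemma auth_eq:
  assumes "card (Auth k) = 2" "x \<in> Auth k"
  shows "Auth k = {x, oth Auth x k} \<and> oth Auth x k \<noteq> x"
proof -
  obtain a b where ab: "Auth k = {a, b}" "a \<noteq> b" using assms(1) card_2_iff by metis
  then obtain z where z: "Auth k = {x, z}" "z \<noteq> x" using assms(2) by auto
  then have "Auth k - {x} = {z}" by auto
  then show ?thesis using z by (simp add: oth_def)
qed

lemma marginal:
  assumes fS: "finite S" and fP: "finite P" and xS: "x \<notin> S"
    and au: "\<forall>k\<in>P. card (Auth k) = 2"
  shows "rel_ext (v_FC P Auth w) q (insert x S) - rel_ext (v_FC P Auth w) q S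
    = (\<Sum>k\<in>{k\<in>P. x \<in> Auth k}. w k * q x * (1 - (if oth Auth x k \<in> S then q (oth Auth x k) else 0)))"
proof -
  have "rel_ext (v_FC P Auth w) q (insert x S) - rel_ext (v_FC P Auth w) q S
     = (\<Sum>k\<in>P. w k * ((\<Prod>i\<in>Auth k \<inter> S. 1 - q i) - (\<Prod>i\<in>Auth k \<inter> insert x S. 1 - q i)))"
    using fS fP by (simp add: rel_ext_vFC sum_subtractf[symmetric] right_diff_distrib)
  also have "\<dots> = (\<Sum>k\<in>P. if x \<in> Auth k then w k * q x * (1 - (if oth Auth x k \<in> S then q (oth Auth x k) else 0)) else 0)"
  proof (rule sum.cong[OF refl])
    fix k assume kP: "k \<in> P"
    show "w k * ((\<Prod>i\<in>Auth k \<inter> S. 1 - q i) - (\<Prod>i\<in>Auth k \<inter> insert x S. 1 - q i)) =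
         (if x \<in> Auth k then w k * q x * (1 - (if oth Auth x k \<in> S then q (oth Auth x k) else 0)) else 0)"
    proof (cases "x \<in> Auth k")
      case True
      with auth_eq[of Auth k x] au kP have e: "Auth k = {x, oth Auth x k}" "oth Auth x k \<noteq> x" by auto
      have i1: "Auth k \<inter> S = (if oth Auth x k \<in> S then {oth Auth x k} else {})"
        using e xS by auto
      have i2: "Auth k \<inter> insert x S = insert x (if oth Auth x k \<in> S then {oth Auth x k} else {})"
        using e xS by auto
      show ?thesis using True e(2) unfolding i1 i2 by (auto simp: algebra_simps)
    next
      case False
      then have "Auth k \<inter> insert x S = Auth k \<inter> S" by auto
      then show ?thesis using False by simp
    qed
  qed
  also have "\<dots> = (\<Sum>k\<in>{k\<in>P. x \<in> Auth k}. w k * q x * (1 - (if oth Auth x k \<in> S then q (oth Auth x k) else 0)))"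
    by (simp add: sum.inter_filter[OF fP])
  finally show ?thesis .
qed

lemma shapley_formula:
  assumes fN: "finite N" and fP: "finite P" and au: "\<forall>k\<in>P. Auth k \<subseteq> N \<and> card (Auth k) = 2"
    and xN: "x \<in> N"
  shows "shapley N (rel_ext (v_FC P Auth w) q) x
    = (\<Sum>k\<in>{k\<in>P. x \<in> Auth k}. w k * q x * (1 - q (oth Auth x k) / 2))"
proof -
  let ?Px = "{k\<in>P. x \<in> Auth k}"
  let ?Pe = "permutations_of_set N"
  let ?o = "oth Auth x"
  have fPx: "finite ?Px" using fP by simp
  have cpos: "real (card ?Pe) > 0" using fN by simp
  have "(\<Sum>ord\<in>?Pe. rel_ext (v_FC P Auth w) q (insert x (preds ord x)) - rel_ext (v_FC P Auth w) q (preds ord x))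
     = (\<Sum>ord\<in>?Pe. \<Sum>k\<in>?Px. w k * q x * (1 - q (?o k) * (if ?o k \<in> preds ord x then 1 else 0)))"
  proof (rule sum.cong[OF refl])
    fix ord assume "ord \<in> ?Pe"
    have fS: "finite (preds ord x)" by (simp add: preds_def)
    have xS: "x \<notin> preds ord x" unfolding preds_def by (auto dest: set_takeWhileD)
    show "rel_ext (v_FC P Auth w) q (insert x (preds ord x)) - rel_ext (v_FC P Auth w) q (preds ord x)
       = (\<Sum>k\<in>?Px. w k * q x * (1 - q (?o k) * (if ?o k \<in> preds ord x then 1 else 0)))"
      using marginal[OF fS fP xS, of Auth w q] au by (simp add: if_distrib cong: if_cong)
  qed
  also have "\<dots> = (\<Sum>k\<in>?Px. w k * q x * (real (card ?Pe) - q (?o k) * (\<Sum>ord\<in>?Pe. (if ?o k \<in> preds ord x then 1 else 0))))"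
  proof -
    have "(\<Sum>ord\<in>?Pe. \<Sum>k\<in>?Px. w k * q x * (1 - q (?o k) * (if ?o k \<in> preds ord x then 1 else 0)))
      = (\<Sum>k\<in>?Px. \<Sum>ord\<in>?Pe. w k * q x * (1 - q (?o k) * (if ?o k \<in> preds ord x then 1 else 0)))"
      by (rule sum.swap)
    also have "\<dots> = (\<Sum>k\<in>?Px. w k * q x * (real (card ?Pe) - q (?o k) * (\<Sum>ord\<in>?Pe. (if ?o k \<in> preds ord x then 1 else 0))))"
    proof (rule sum.cong[OF refl])
      fix k
      have "(\<Sum>ord\<in>?Pe. w k * q x * (1 - q (?o k) * (if ?o k \<in> preds ord x then 1 else 0)))
          = w k * q x * (\<Sum>ord\<in>?Pe. (1 - q (?o k) * (if ?o k \<in> preds ord x then 1 else 0)))"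
        by (rule sum_distrib_left[symmetric])
      also have "(\<Sum>ord\<in>?Pe. (1 - q (?o k) * (if ?o k \<in> preds ord x then 1 else 0 :: real)))
          = real (card ?Pe) - q (?o k) * (\<Sum>ord\<in>?Pe. (if ?o k \<in> preds ord x then 1 else 0))"
        by (simp only: sum_subtractf sum_distrib_left[symmetric]) simp
      finally show "(\<Sum>ord\<in>?Pe. w k * q x * (1 - q (?o k) * (if ?o k \<in> preds ord x then 1 else 0)))
          = w k * q x * (real (card ?Pe) - q (?o k) * (\<Sum>ord\<in>?Pe. (if ?o k \<in> preds ord x then 1 else 0)))" .
    qed
    finally show ?thesis .
  qed
  also have "\<dots> = (\<Sum>k\<in>?Px. w k * q x * (real (card ?Pe) - q (?o k) * (real (card ?Pe) / 2)))"
  proof (rule sum.cong[OF refl])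
    fix k assume "k \<in> ?Px"
    with auth_eq[of Auth k x] au have "?o k \<in> N" "?o k \<noteq> x" by auto
    then show "w k * q x * (real (card ?Pe) - q (?o k) * (\<Sum>ord\<in>?Pe. (if ?o k \<in> preds ord x then 1 else 0)))
       = w k * q x * (real (card ?Pe) - q (?o k) * (real (card ?Pe) / 2))"
      using count_half[OF fN _ xN] by simp
  qed
  also have "\<dots> = real (card ?Pe) * (\<Sum>k\<in>?Px. w k * q x * (1 - q (?o k) / 2))"
    by (simp add: sum_distrib_left algebra_simps)
  finally have "(\<Sum>ord\<in>?Pe. rel_ext (v_FC P Auth w) q (insert x (preds ord x)) - rel_ext (v_FC P Auth w) q (preds ord x)) = real (card ?Pe) * (\<Sum>k\<in>?Px. w k * q x * (1 - q (?o k) / 2))" .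
  then show ?thesis unfolding shapley_def using cpos fN by simp
qed



lemma greedy_out: "j \<notin> set ls \<Longrightarrow> greedy R pstar b ls j = pstar j"
  by (induction ls arbitrary: b) auto

lemma greedy_bounds:
  assumes "\<forall>j\<in>set ls. R j > 0 \<and> pstar j \<le> 1" "b \<ge> 0" "j \<in> set ls"
  shows "pstar j \<le> greedy R pstar b ls j \<and> greedy R pstar b ls j \<le> 1"
  using assms
proof (induction ls arbitrary: b)
  case Nil then show ?case by simp
next
  case (Cons l rest)
  show ?case
  proof (cases "R l * (1 - pstar l) \<le> b")
    case True
    then show ?thesis using Cons.IH[of "b - R l * (1 - pstar l)"] Cons.prems by auto
  next
    case False
    have Rl: "R l > 0" "pstar l \<le> 1" using Cons.prems by auto
    have "b / R l \<le> 1 - pstar l" using False Rl by (simp add: divide_le_eq mult.commute)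
    moreover have "b / R l \<ge> 0" using Rl Cons.prems by simp
    ultimately show ?thesis using False Cons.prems by auto
  qed
qed

lemma greedy_cost:
  assumes "distinct ls" "\<forall>j\<in>set ls. R j > 0 \<and> pstar j \<le> 1" "b \<ge> 0"
  shows "(\<Sum>j\<in>set ls. R j * (greedy R pstar b ls j - pstar j)) \<le> b"
  using assms
proof (induction ls arbitrary: b)
  case Nil then show ?case by simp
next
  case (Cons l rest)
  have lr: "l \<notin> set rest" using Cons.prems by simp
  have Rl: "R l > 0" "pstar l \<le> 1" using Cons.prems by auto
  show ?case
  proof (cases "R l * (1 - pstar l) \<le> b")
    case True
    have "(\<Sum>j\<in>set rest. R j * (greedy R pstar b (l # rest) j - pstar j))
        = (\<Sum>j\<in>set rest. R j * (greedy R pstar (b - R l * (1 - pstar l)) rest j - pstar j))"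
      using True lr by (auto intro!: sum.cong)
    moreover have "(\<Sum>j\<in>set rest. R j * (greedy R pstar (b - R l * (1 - pstar l)) rest j - pstar j)) \<le> b - R l * (1 - pstar l)"
      using Cons.IH[of "b - R l * (1 - pstar l)"] Cons.prems True by auto
    ultimately show ?thesis using True lr by simp
  next
    case False
    have "(\<Sum>j\<in>set rest. R j * (greedy R pstar b (l # rest) j - pstar j)) = 0"
      using False lr by (auto intro!: sum.neutral)
    then show ?thesis using False lr Rl by simp
  qed
qed

lemma max_help: "0 \<le> r \<Longrightarrow> r \<le> (\<theta>::real) \<Longrightarrow> r * z \<le> \<theta> * max 0 z"
  by (cases "z \<ge> 0") (auto intro: mult_right_mono mult_nonneg_nonpos)

lemma knap:
  assumes "distinct ls" "sorted_wrt (\<lambda>a b. c a / R a \<ge> c b / R b) ls"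
    "\<forall>j\<in>set ls. R j > 0 \<and> c j \<ge> 0 \<and> pstar j \<le> 1" "\<theta> \<ge> 0" "\<forall>j\<in>set ls. c j \<le> \<theta> * R j"
    "b \<ge> 0" "\<forall>j\<in>set ls. pstar j \<le> q j \<and> q j \<le> 1"
  shows "(\<Sum>j\<in>set ls. c j * (q j - pstar j)) \<le> (\<Sum>j\<in>set ls. c j * (greedy R pstar b ls j - pstar j))
          + \<theta> * max 0 ((\<Sum>j\<in>set ls. R j * (q j - pstar j)) - b)"
  using assms
proof (induction ls arbitrary: b \<theta>)
  case Nil then show ?case by simp
next
  case (Cons l rest)
  have lr: "l \<notin> set rest" using Cons.prems by simp
  have Rl: "R l > 0" "pstar l \<le> 1" "c l \<ge> 0" using Cons.prems by auto
  define r where "r = c l / R l"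
  have cl: "c l = r * R l" unfolding r_def using Rl by simp
  have r0: "r \<ge> 0" unfolding r_def using Rl by simp
  have rt: "r \<le> \<theta>" using Cons.prems(5) Rl unfolding r_def by (simp add: divide_le_eq)
  have cj: "c j \<le> r * R j" if "j \<in> set rest" for j
  proof -
    have "c j / R j \<le> r" using Cons.prems(2) that unfolding r_def by auto
    then show ?thesis using Cons.prems(3) that by (simp add: divide_le_eq)
  qed
  define s where "s = (\<Sum>j\<in>set rest. R j * (q j - pstar j))"
  define Q where "Q = (\<Sum>j\<in>set rest. c j * (q j - pstar j))"
  define d where "d = q l - pstar l"
  have d: "0 \<le> d" "d \<le> 1 - pstar l" using Cons.prems(7) unfolding d_def by auto
  have Qs: "Q \<le> r * s" unfolding Q_def s_def sum_distrib_left
    using cj Cons.prems(7) by (auto intro!: sum_mono mult_right_mono simp: mult.assoc[symmetric])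
  have LHS: "(\<Sum>j\<in>set (l # rest). c j * (q j - pstar j)) = r * R l * d + Q"
    using lr cl unfolding Q_def d_def by simp
  have S: "(\<Sum>j\<in>set (l # rest). R j * (q j - pstar j)) = R l * d + s"
    using lr unfolding s_def d_def by simp
  show ?case
  proof (cases "R l * (1 - pstar l) \<le> b")
    case True
    define b' where "b' = b - R l * (1 - pstar l)"
    define G where "G = (\<Sum>j\<in>set rest. c j * (greedy R pstar b' rest j - pstar j))"
    have IH: "Q \<le> G + r * max 0 (s - b')"
      using Cons.IH[where b=b' and \<theta>=r] Cons.prems True r0 cj unfolding Q_def G_def s_def b'_def by auto
    have RHS: "(\<Sum>j\<in>set (l # rest). c j * (greedy R pstar b (l # rest) j - pstar j)) = r * R l * (1 - pstar l) + G"
      using True lr cl unfolding G_def b'_def by (auto intro!: sum.cong)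
    have key: "r * R l * d + r * max 0 (s - b') \<le> r * R l * (1 - pstar l) + \<theta> * max 0 (R l * d + s - b)"
    proof (cases "s - b' \<le> 0")
      case True
      have "r * R l * d \<le> r * R l * (1 - pstar l)" using d r0 Rl by (simp add: mult_left_mono)
      moreover have "0 \<le> \<theta> * max 0 (R l * d + s - b)" using Cons.prems(4) by simp
      ultimately show ?thesis using True by simp
    next
      case False
      have "r * (R l * d + s - b) \<le> \<theta> * max 0 (R l * d + s - b)" by (rule max_help[OF r0 rt])
      then show ?thesis using False unfolding b'_def by (simp add: algebra_simps)
    qed
    show ?thesis unfolding LHS S RHS using IH key by linarith
  next
    case False
    have RHS: "(\<Sum>j\<in>set (l # rest). c j * (greedy R pstar b (l # rest) j - pstar j)) = r * b"
      using False lr cl Rl by (auto intro!: sum.neutral)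
    have "r * (R l * d + s - b) \<le> \<theta> * max 0 (R l * d + s - b)" by (rule max_help[OF r0 rt])
    then show ?thesis unfolding LHS S RHS using Qs by (simp add: algebra_simps)
  qed
qed



lemma group_oth:
  assumes fP: "finite P" and au: "\<forall>k\<in>P. Auth k \<subseteq> N \<and> card (Auth k) = 2"
  shows "(\<Sum>k\<in>{k\<in>P. x \<in> Auth k}. w k * f (oth Auth x k))
       = (\<Sum>l\<in>coauthors N P Auth x. joint_credit P Auth w x l * f l)"
proof -
  let ?Px = "{k\<in>P. x \<in> Auth k}"
  let ?o = "oth Auth x"
  have ae: "Auth k = {x, ?o k} \<and> ?o k \<noteq> x" if "k \<in> ?Px" for k
    using auth_eq[of Auth k x] au that by auto
  have img: "?o ` ?Px = coauthors N P Auth x"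
  proof
    show "?o ` ?Px \<subseteq> coauthors N P Auth x"
    proof
      fix l assume "l \<in> ?o ` ?Px"
      then obtain k where k: "k \<in> ?Px" "l = ?o k" by auto
      then show "l \<in> coauthors N P Auth x" using ae[OF k(1)] au unfolding coauthors_def by force
    qed
    show "coauthors N P Auth x \<subseteq> ?o ` ?Px"
    proof
      fix l assume "l \<in> coauthors N P Auth x"
      then obtain k where k: "k \<in> P" "x \<in> Auth k" "l \<in> Auth k" "l \<noteq> x" unfolding coauthors_def by auto
      then have "l = ?o k" using ae[of k] by auto
      then show "l \<in> ?o ` ?Px" using k by auto
    qed
  qed
  have "(\<Sum>k\<in>?Px. w k * f (?o k)) = (\<Sum>l\<in>?o ` ?Px. \<Sum>k\<in>{k. k \<in> ?Px \<and> ?o k = l}. w k * f (?o k))"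
    by (rule sum.image_gen) (simp add: fP)
  also have "\<dots> = (\<Sum>l\<in>coauthors N P Auth x. joint_credit P Auth w x l * f l)"
    unfolding img
  proof (rule sum.cong[OF refl])
    fix l assume l: "l \<in> coauthors N P Auth x"
    then have lx: "l \<noteq> x" unfolding coauthors_def by auto
    have "{k. k \<in> ?Px \<and> ?o k = l} = {k\<in>P. x \<in> Auth k \<and> l \<in> Auth k}"
      using ae lx by blast
    moreover have "(\<Sum>k\<in>{k. k \<in> ?Px \<and> ?o k = l}. w k * f (?o k)) = (\<Sum>k\<in>{k. k \<in> ?Px \<and> ?o k = l}. w k * f l)"
      by (rule sum.cong) auto
    ultimately show "(\<Sum>k\<in>{k. k \<in> ?Px \<and> ?o k = l}. w k * f (?o k)) = joint_credit P Auth w x l * f l"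
      unfolding joint_credit_def by (simp add: sum_distrib_right)
  qed
  finally show ?thesis .
qed

lemma sh_rewrite:
  "(\<Sum>k\<in>K. w k * (a::real) * (1 - f k / 2)) = a * (\<Sum>k\<in>K. w k) - a / 2 * (\<Sum>k\<in>K. w k * f k)"
  by (simp add: sum_subtractf sum_distrib_left algebra_simps sum_divide_distrib)



theorem corollary2:
  fixes N :: "'a set" and P :: "'k set" and Auth :: "'k \<Rightarrow> 'a set" and w :: "'k \<Rightarrow> real"
    and pstar L R :: "'a \<Rightarrow> real" and B :: real and x y :: 'a and ls :: "'a list"
  assumes "finite N" and "finite P"
    and "\<forall>k\<in>P. Auth k \<subseteq> N \<and> card (Auth k) = 2"
    and "\<forall>k\<in>P. w k > 0"
    and "x \<in> N" and "y \<in> N" and "x \<noteq> y"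
    and "0 \<le> pstar x" and "pstar x \<le> 1" and "0 \<le> pstar y" and "pstar y \<le> 1"
    and "\<forall>l\<in>N - {x, y}. 0 < pstar l \<and> pstar l \<le> 1"
    and "\<forall>l\<in>N. L l > 0 \<and> R l > 0"
    and "B \<ge> 0"
    and "distinct ls"
    and "set ls = coauthors N P Auth x - (coauthors N P Auth y \<union> {y})"
    and "sorted_wrt (\<lambda>a b. joint_credit P Auth w x a / R a \<ge> joint_credit P Auth w x b / R b) ls"
  shows "pairwise_attack N P Auth L R pstar B x y (greedy R pstar B ls) \<and>
         (\<forall>q. pairwise_attack N P Auth L R pstar B x y q \<longrightarrow>
            shapley N (rel_ext (v_FC P Auth w) (greedy R pstar B ls)) x
              \<le> shapley N (rel_ext (v_FC P Auth w) q) x)"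
proof -
  note fN = assms(1) and fP = assms(2) and au = assms(3) and wpos = assms(4)
    and xN = assms(5) and yN = assms(6) and xy = assms(7) and pN = assms(12) and LR = assms(13)
    and B0 = assms(14) and dls = assms(15) and sls = assms(16) and sorted = assms(17)
  define g where "g = greedy R pstar B ls"
  define C where "C = joint_credit P Auth w x"
  define CAx where "CAx = coauthors N P Auth x"
  have CAxN: "CAx \<subseteq> N - {x}" unfolding CAx_def coauthors_def by auto
  have fCAx: "finite CAx" using CAxN fN finite_subset by blast
  have lsN: "set ls \<subseteq> N - {x, y}" using sls CAxN unfolding CAx_def by auto
  have lsC: "set ls \<subseteq> CAx" using sls unfolding CAx_def by auto
  have lsprop: "\<forall>j\<in>set ls. R j > 0 \<and> pstar j \<le> 1" using lsN pN LR by auto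
  have gout: "g j = pstar j" if "j \<notin> set ls" for j
    unfolding g_def using greedy_out that by metis
  have gin: "pstar j \<le> g j \<and> g j \<le> 1" if "j \<in> set ls" for j
    unfolding g_def using greedy_bounds[OF lsprop B0 that] .
  have gcost: "(\<Sum>j\<in>set ls. R j * (g j - pstar j)) \<le> B"
    unfolding g_def using greedy_cost[OF dls lsprop B0] .
  have Cnn: "C l \<ge> 0" for l unfolding C_def joint_credit_def using wpos
    by (intro sum_nonneg) (simp add: less_imp_le)
  have cost_nn: "0 \<le> (if q j < pstar j then L j * (pstar j - q j) else R j * (q j - pstar j))"
    if "j \<in> N" for q j using LR that by auto
  have xls: "x \<notin> set ls" using lsN by auto
  have pa: "pairwise_attack N P Auth L R pstar B x y g"
  proof -
    have "g x = pstar x" using gout xls by simp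
    moreover have "\<forall>j\<in>N - {x}. 0 \<le> g j \<and> g j \<le> 1"
    proof
      fix j assume j: "j \<in> N - {x}"
      show "0 \<le> g j \<and> g j \<le> 1"
      proof (cases "j \<in> set ls")
        case True
        then show ?thesis using gin[OF True] lsN pN by force
      next
        case False
        then show ?thesis using gout[OF False] j pN assms(10,11) by (cases "j = y") force+
      qed
    qed
    moreover have "attack_cost N L R pstar x g \<le> B"
    proof -
      have "attack_cost N L R pstar x g = (\<Sum>j\<in>N - {x}. if j \<in> set ls then R j * (g j - pstar j) else 0)"
        unfolding attack_cost_def
      proof (rule sum.cong[OF refl])
        fix j assume "j \<in> N - {x}"
        show "(if g j < pstar j then L j * (pstar j - g j) else R j * (g j - pstar j)) =
              (if j \<in> set ls then R j * (g j - pstar j) else 0)"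
          using gin[of j] gout[of j] by (cases "j \<in> set ls") auto
      qed
      also have "\<dots> = (\<Sum>j\<in>(N - {x}) \<inter> set ls. R j * (g j - pstar j))"
        by (rule sum.inter_restrict[symmetric]) (simp add: fN)
      also have "(N - {x}) \<inter> set ls = set ls" using lsN by auto
      finally show ?thesis using gcost by simp
    qed
    moreover have "\<forall>j\<in>insert y (coauthors N P Auth y) - {x}. g j = pstar j"
      using gout sls by auto
    ultimately show ?thesis unfolding pairwise_attack_def feasible_attack_def by simp
  qed
  have opt: "shapley N (rel_ext (v_FC P Auth w) g) x \<le> shapley N (rel_ext (v_FC P Auth w) q) x"
    if q: "pairwise_attack N P Auth L R pstar B x y q" for q
  proof -
    have qx: "q x = pstar x" and qb: "\<forall>j\<in>N - {x}. 0 \<le> q j \<and> q j \<le> 1"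
      and qc: "attack_cost N L R pstar x q \<le> B"
      and qf: "\<forall>j\<in>insert y (coauthors N P Auth y) - {x}. q j = pstar j"
      using q unfolding pairwise_attack_def feasible_attack_def by auto
    define q' where "q' j = max (q j) (pstar j)" for j
    define \<theta> where "\<theta> = (\<Sum>j\<in>set ls. C j / R j)"
    have th0: "\<theta> \<ge> 0" unfolding \<theta>_def using Cnn lsprop by (auto intro!: sum_nonneg)
    have thC: "\<forall>j\<in>set ls. C j \<le> \<theta> * R j"
    proof
      fix j assume j: "j \<in> set ls"
      have "C j / R j \<le> \<theta>" unfolding \<theta>_def
        by (rule member_le_sum[OF j]) (use Cnn lsprop in auto)
      then show "C j \<le> \<theta> * R j" using lsprop j by (simp add: divide_le_eq)
    qed
    have q'b: "\<forall>j\<in>set ls. pstar j \<le> q' j \<and> q' j \<le> 1" using qb lsN lsprop unfolding q'_def by auto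
    have "(\<Sum>j\<in>set ls. R j * (q' j - pstar j))
        \<le> (\<Sum>j\<in>set ls. (if q j < pstar j then L j * (pstar j - q j) else R j * (q j - pstar j)))"
      by (rule sum_mono) (use lsN LR in \<open>force simp: q'_def max_def\<close>)
    also have "\<dots> \<le> (\<Sum>j\<in>N - {x}. (if q j < pstar j then L j * (pstar j - q j) else R j * (q j - pstar j)))"
      by (rule sum_mono2) (use fN lsN cost_nn in auto)
    also have "\<dots> \<le> B" using qc unfolding attack_cost_def .
    finally have q'cost: "(\<Sum>j\<in>set ls. R j * (q' j - pstar j)) \<le> B" .
    have "(\<Sum>j\<in>set ls. C j * (q' j - pstar j)) \<le> (\<Sum>j\<in>set ls. C j * (greedy R pstar B ls j - pstar j))
          + \<theta> * max 0 ((\<Sum>j\<in>set ls. R j * (q' j - pstar j)) - B)"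
      by (rule knap[OF dls sorted[folded C_def]]) (use lsprop Cnn th0 thC B0 q'b in auto)
    also have "max 0 ((\<Sum>j\<in>set ls. R j * (q' j - pstar j)) - B) = 0" using q'cost by simp
    finally have "(\<Sum>j\<in>set ls. C j * (q' j - pstar j)) \<le> (\<Sum>j\<in>set ls. C j * (g j - pstar j))"
      unfolding g_def by simp
    then have k1: "(\<Sum>j\<in>set ls. C j * q' j) \<le> (\<Sum>j\<in>set ls. C j * g j)"
      by (simp add: right_diff_distrib sum_subtractf)
    have k0: "(\<Sum>j\<in>set ls. C j * q j) \<le> (\<Sum>j\<in>set ls. C j * q' j)"
      by (rule sum_mono) (use Cnn in \<open>auto simp: q'_def intro: mult_left_mono\<close>)
    have rest: "(\<Sum>j\<in>CAx - set ls. C j * q j) = (\<Sum>j\<in>CAx - set ls. C j * g j)"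
    proof (rule sum.cong[OF refl])
      fix j assume j: "j \<in> CAx - set ls"
      then have "j \<in> insert y (coauthors N P Auth y) - {x}" using sls CAxN unfolding CAx_def by auto
      then show "C j * q j = C j * g j" using qf gout j by auto
    qed
    have main: "(\<Sum>l\<in>CAx. C l * q l) \<le> (\<Sum>l\<in>CAx. C l * g l)"
      using k0 k1 rest sum.subset_diff[OF lsC fCAx, of "\<lambda>j. C j * q j"]
        sum.subset_diff[OF lsC fCAx, of "\<lambda>j. C j * g j"] by linarith
    have gx: "g x = pstar x" using gout xls by simp
    let ?Px = "{k\<in>P. x \<in> Auth k}"
    have "shapley N (rel_ext (v_FC P Auth w) g) x
       = pstar x * (\<Sum>k\<in>?Px. w k) - pstar x / 2 * (\<Sum>l\<in>CAx. C l * g l)"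
      unfolding shapley_formula[OF fN fP au xN] sh_rewrite gx
      using group_oth[OF fP au, where x=x and w=w and f=g] unfolding C_def CAx_def by simp
    moreover have "shapley N (rel_ext (v_FC P Auth w) q) x
       = pstar x * (\<Sum>k\<in>?Px. w k) - pstar x / 2 * (\<Sum>l\<in>CAx. C l * q l)"
      unfolding shapley_formula[OF fN fP au xN] sh_rewrite qx
      using group_oth[OF fP au, where x=x and w=w and f=q] unfolding C_def CAx_def by simp
    moreover have "pstar x / 2 * (\<Sum>l\<in>CAx. C l * q l) \<le> pstar x / 2 * (\<Sum>l\<in>CAx. C l * g l)"
      using main assms(8) by (simp add: mult_left_mono)
    ultimately show ?thesis by simp
  qed
  show ?thesis using pa opt unfolding g_def by blast
qed

end
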